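(* Let $\Gamma$ be a finite multiset of formulas and $B_1,\ldots,B_n$ formulas such that $\Gamma\longrightarrow B_1,\ldots,B_n$ has a $\mathbf{C}$-proof in which no $\supset$-R and no $\forall$-L rule is used. Then the sequent $\Gamma\longrightarrow B_1\lor\cdots\lor B_n$ has an $\mathbf{I}$-proof. In the case $n=1$, $\Gamma\longrightarrow B_1$ has an $\mathbf{I}$-proof.
   Context: Formulas are first-order formulas built from atomic formulas and the logical constants $\top$, $\bot$ (not counted as atomic) using $\land,\lor,\supset,\forall,\exists$; $\neg A$ abbreviates $A\supset\bot$; $B[t/x]$ is capture-avoiding substitution of term $t$ for free $x$ in $B$. A sequent $\Gamma\longrightarrow\Delta$ is a pair of finite multisets of formulas; $B,\Gamma$ denotes $\Gamma$ with an extra occurrence of $B$. A sequent is an axiom if $\top\in\Delta$ or some formula that is $\bot$ or atomic occurs in both $\Gamma$ and $\Delta$. Writing premises $\Rightarrow$ conclusion, the rules are all instances of: contr-L: $B,B,\Gamma\longrightarrow\Delta\Rightarrow B,\Gamma\longrightarrow\Delta$; contr-R: $\Gamma\longrightarrow\Delta,B,B\Rightarrow\Gamma\longrightarrow\Delta,B$; $\bot$-R: $\Gamma\longrightarrow\Delta,\bot\Rightarrow\Gamma\longrightarrow\Delta,D$; $\land$-L: $B,\Gamma\longrightarrow\Delta\Rightarrow B\land D,\Gamma\longrightarrow\Delta$ and $D,\Gamma\longrightarrow\Delta\Rightarrow B\land D,\Gamma\longrightarrow\Delta$; $\lor$-L: $B,\Gamma\longrightarrow\Delta$ and $D,\Gamma\longrightarrow\Delta\Rightarrow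 B\lor D,\Gamma\longrightarrow\Delta$; $\land$-R: $\Gamma\longrightarrow\Delta,B$ and $\Gamma\longrightarrow\Delta,D\Rightarrow\Gamma\longrightarrow\Delta,B\land D$; $\lor$-R: $\Gamma\longrightarrow\Delta,B\Rightarrow\Gamma\longrightarrow\Delta,B\lor D$ and $\Gamma\longrightarrow\Delta,D\Rightarrow\Gamma\longrightarrow\Delta,B\lor D$; $\supset$-L: $\Gamma\longrightarrow\Delta,B$ and $D,\Gamma\longrightarrow\Theta\Rightarrow B\supset D,\Gamma\longrightarrow\Delta,\Theta$; $\supset$-R: $B,\Gamma\longrightarrow\Delta,D\Rightarrow\Gamma\longrightarrow\Delta,B\supset D$; $\forall$-L: $B[t/x],\Gamma\longrightarrow\Delta\Rightarrow\forall x B,\Gamma\longrightarrow\Delta$; $\exists$-R: $\Gamma\longrightarrow\Delta,B[t/x]\Rightarrow\Gamma\longrightarrow\Delta,\exists x B$ ($t$ any term); $\exists$-L: $B[c/x],\Gamma\longrightarrow\Delta\Rightarrow\exists x B,\Gamma\longrightarrow\Delta$; $\forall$-R: $\Gamma\longrightarrow\Delta,B[c/x]\Rightarrow\Gamma\longrightarrow\Delta,\forall x B$, where the constant $c$ does not occur in the conclusion. A $\mathbf{C}$-proof (classical) is a finite tree of sequents with axioms at the leaves, each internal node being the conclusion of a rule instance whose premises are its children. An $\mathbf{I}$-proof (intuitionistic) is a $\mathbf{C}$-proof in which every sequent has exactly one formula in its succedent. A rule "is used" if some instance of that schema occurs in the proof. *)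

theory Defs
  imports Main "HOL-Library.Multiset"
begin

text \<open>Terms: bound variables (de Bruijn indices, only occurring under quantifiers),
free variables, and function symbols applied to arguments (constants are 0-ary
function symbols).\<close>

datatype tm = Bound nat | FVar nat | Fn nat "tm list"

datatype fm =
    Atom nat "tm list"
  | Top
  | Bot
  | And fm fm
  | Or fm fm
  | Imp fm fm
  | All fm
  | Ex fm

definition Neg :: "fm \<Rightarrow> fm" where "Neg A = Imp A Bot"

fun inst_tm :: "nat \<Rightarrow> tm \<Rightarrow> tm \<Rightarrow> tm" where
  "inst_tm k t (Bound i) = (if i = k then t else Bound i)"
| "inst_tm k t (FVar v) = FVar v"
| "inst_tm k t (Fn f ts) = Fn f (map (inst_tm k t) ts)"

fun inst_fm :: "nat \<Rightarrow> tm \<Rightarrow> fm \<Rightarrow> fm" where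
  "inst_fm k t (Atom p ts) = Atom p (map (inst_tm k t) ts)"
| "inst_fm k t Top = Top"
| "inst_fm k t Bot = Bot"
| "inst_fm k t (And A B) = And (inst_fm k t A) (inst_fm k t B)"
| "inst_fm k t (Or A B) = Or (inst_fm k t A) (inst_fm k t B)"
| "inst_fm k t (Imp A B) = Imp (inst_fm k t A) (inst_fm k t B)"
| "inst_fm k t (All A) = All (inst_fm (Suc k) t A)"
| "inst_fm k t (Ex A) = Ex (inst_fm (Suc k) t A)"

text \<open>B[t/x] for the quantified formula \<open>\<forall>x B\<close> / \<open>\<exists>x B\<close> whose body is B.\<close>
abbreviation subst0 :: "fm \<Rightarrow> tm \<Rightarrow> fm" where
  "subst0 B t \<equiv> inst_fm 0 t B"

fun lc_tm :: "nat \<Rightarrow> tm \<Rightarrow> bool" where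
  "lc_tm k (Bound i) = (i < k)"
| "lc_tm k (FVar v) = True"
| "lc_tm k (Fn f ts) = (\<forall>s\<in>set ts. lc_tm k s)"

fun lc_fm :: "nat \<Rightarrow> fm \<Rightarrow> bool" where
  "lc_fm k (Atom p ts) = (\<forall>s\<in>set ts. lc_tm k s)"
| "lc_fm k Top = True"
| "lc_fm k Bot = True"
| "lc_fm k (And A B) = (lc_fm k A \<and> lc_fm k B)"
| "lc_fm k (Or A B) = (lc_fm k A \<and> lc_fm k B)"
| "lc_fm k (Imp A B) = (lc_fm k A \<and> lc_fm k B)"
| "lc_fm k (All A) = lc_fm (Suc k) A"
| "lc_fm k (Ex A) = lc_fm (Suc k) A"

abbreviation term_ok :: "tm \<Rightarrow> bool" where "term_ok t \<equiv> lc_tm 0 t"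
abbreviation formula_ok :: "fm \<Rightarrow> bool" where "formula_ok A \<equiv> lc_fm 0 A"

fun syms_tm :: "tm \<Rightarrow> nat set" where
  "syms_tm (Bound i) = {}"
| "syms_tm (FVar v) = {}"
| "syms_tm (Fn f ts) = insert f (\<Union>s\<in>set ts. syms_tm s)"

fun syms_fm :: "fm \<Rightarrow> nat set" where
  "syms_fm (Atom p ts) = (\<Union>s\<in>set ts. syms_tm s)"
| "syms_fm Top = {}"
| "syms_fm Bot = {}"
| "syms_fm (And A B) = syms_fm A \<union> syms_fm B"
| "syms_fm (Or A B) = syms_fm A \<union> syms_fm B"
| "syms_fm (Imp A B) = syms_fm A \<union> syms_fm B"
| "syms_fm (All A) = syms_fm A"
| "syms_fm (Ex A) = syms_fm A"

definition syms_seq :: "fm multiset \<Rightarrow> fm multiset \<Rightarrow> nat set" where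
  "syms_seq G D = (\<Union>A\<in>set_mset (G + D). syms_fm A)"

fun is_atomic :: "fm \<Rightarrow> bool" where
  "is_atomic (Atom p ts) = True"
| "is_atomic _ = False"

definition is_axiom :: "fm multiset \<Rightarrow> fm multiset \<Rightarrow> bool" where
  "is_axiom G D \<longleftrightarrow> Top \<in># D \<or> (\<exists>A. (A = Bot \<or> is_atomic A) \<and> A \<in># G \<and> A \<in># D)"

datatype rule = ContrL | ContrR | BotR | AndL | OrL | AndR | OrR | ImpL | ImpR
  | AllL | ExR | ExL | AllR

inductive deriv :: "(fm multiset \<Rightarrow> fm multiset \<Rightarrow> bool) \<Rightarrow> rule set
                    \<Rightarrow> fm multiset \<Rightarrow> fm multiset \<Rightarrow> bool"
  for P R where
  ax: "P G D \<Longrightarrow> is_axiom G D \<Longrightarrow> deriv P R G D"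
| contrL: "P (add_mset B G) D \<Longrightarrow> ContrL \<in> R \<Longrightarrow>
     deriv P R (add_mset B (add_mset B G)) D \<Longrightarrow> deriv P R (add_mset B G) D"
| contrR: "P G (add_mset B D) \<Longrightarrow> ContrR \<in> R \<Longrightarrow>
     deriv P R G (add_mset B (add_mset B D)) \<Longrightarrow> deriv P R G (add_mset B D)"
| botR: "P G (add_mset C D) \<Longrightarrow> BotR \<in> R \<Longrightarrow>
     deriv P R G (add_mset Bot D) \<Longrightarrow> deriv P R G (add_mset C D)"
| andL1: "P (add_mset (And B C) G) D \<Longrightarrow> AndL \<in> R \<Longrightarrow>
     deriv P R (add_mset B G) D \<Longrightarrow> deriv P R (add_mset (And B C) G) D"
| andL2: "P (add_mset (And B C) G) D \<Longrightarrow> AndL \<in> R \<Longrightarrow>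
     deriv P R (add_mset C G) D \<Longrightarrow> deriv P R (add_mset (And B C) G) D"
| orL: "P (add_mset (Or B C) G) D \<Longrightarrow> OrL \<in> R \<Longrightarrow>
     deriv P R (add_mset B G) D \<Longrightarrow> deriv P R (add_mset C G) D \<Longrightarrow>
     deriv P R (add_mset (Or B C) G) D"
| andR: "P G (add_mset (And B C) D) \<Longrightarrow> AndR \<in> R \<Longrightarrow>
     deriv P R G (add_mset B D) \<Longrightarrow> deriv P R G (add_mset C D) \<Longrightarrow>
     deriv P R G (add_mset (And B C) D)"
| orR1: "P G (add_mset (Or B C) D) \<Longrightarrow> OrR \<in> R \<Longrightarrow>
     deriv P R G (add_mset B D) \<Longrightarrow> deriv P R G (add_mset (Or B C) D)"
| orR2: "P G (add_mset (Or B C) D) \<Longrightarrow> OrR \<in> R \<Longrightarrow>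
     deriv P R G (add_mset C D) \<Longrightarrow> deriv P R G (add_mset (Or B C) D)"
| impL: "P (add_mset (Imp B C) G) (D + T) \<Longrightarrow> ImpL \<in> R \<Longrightarrow>
     deriv P R G (add_mset B D) \<Longrightarrow> deriv P R (add_mset C G) T \<Longrightarrow>
     deriv P R (add_mset (Imp B C) G) (D + T)"
| impR: "P G (add_mset (Imp B C) D) \<Longrightarrow> ImpR \<in> R \<Longrightarrow>
     deriv P R (add_mset B G) (add_mset C D) \<Longrightarrow> deriv P R G (add_mset (Imp B C) D)"
| allL: "P (add_mset (All B) G) D \<Longrightarrow> AllL \<in> R \<Longrightarrow> term_ok t \<Longrightarrow>
     deriv P R (add_mset (subst0 B t) G) D \<Longrightarrow> deriv P R (add_mset (All B) G) D"
| exR: "P G (add_mset (Ex B) D) \<Longrightarrow> ExR \<in> R \<Longrightarrow> term_ok t \<Longrightarrow>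
     deriv P R G (add_mset (subst0 B t) D) \<Longrightarrow> deriv P R G (add_mset (Ex B) D)"
| exL: "P (add_mset (Ex B) G) D \<Longrightarrow> ExL \<in> R \<Longrightarrow>
     c \<notin> syms_seq (add_mset (Ex B) G) D \<Longrightarrow>
     deriv P R (add_mset (subst0 B (Fn c [])) G) D \<Longrightarrow> deriv P R (add_mset (Ex B) G) D"
| allR: "P G (add_mset (All B) D) \<Longrightarrow> AllR \<in> R \<Longrightarrow>
     c \<notin> syms_seq G (add_mset (All B) D) \<Longrightarrow>
     deriv P R G (add_mset (subst0 B (Fn c [])) D) \<Longrightarrow> deriv P R G (add_mset (All B) D)"

abbreviation C_provable_with :: "rule set \<Rightarrow> fm multiset \<Rightarrow> fm multiset \<Rightarrow> bool" where
  "C_provable_with R G D \<equiv> deriv (\<lambda>_ _. True) R G D"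

text \<open>An I-proof: a C-proof in which every sequent has exactly one succedent formula.\<close>
abbreviation I_provable :: "fm multiset \<Rightarrow> fm multiset \<Rightarrow> bool" where
  "I_provable G D \<equiv> deriv (\<lambda>_ D'. size D' = 1) UNIV G D"

fun disj :: "fm list \<Rightarrow> fm" where
  "disj [] = Bot"
| "disj [B] = B"
| "disj (B # Bs) = Or B (disj Bs)"

end

theory Submission
  imports Defs
begin

fun ren_tm :: "(nat \<Rightarrow> nat) \<Rightarrow> tm \<Rightarrow> tm" where
  "ren_tm f (Bound i) = Bound i"
| "ren_tm f (FVar v) = FVar v"
| "ren_tm f (Fn g ts) = Fn (f g) (map (ren_tm f) ts)"

fun ren_fm :: "(nat \<Rightarrow> nat) \<Rightarrow> fm \<Rightarrow> fm" where
  "ren_fm f (Atom p ts) = Atom p (map (ren_tm f) ts)"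
| "ren_fm f Top = Top"
| "ren_fm f Bot = Bot"
| "ren_fm f (And A B) = And (ren_fm f A) (ren_fm f B)"
| "ren_fm f (Or A B) = Or (ren_fm f A) (ren_fm f B)"
| "ren_fm f (Imp A B) = Imp (ren_fm f A) (ren_fm f B)"
| "ren_fm f (All A) = All (ren_fm f A)"
| "ren_fm f (Ex A) = Ex (ren_fm f A)"

lemma ren_inst_tm: "ren_tm f (inst_tm k t s) = inst_tm k (ren_tm f t) (ren_tm f s)"
  by (induction s) auto

lemma ren_inst_fm: "ren_fm f (inst_fm k t A) = inst_fm k (ren_tm f t) (ren_fm f A)"
  by (induction A arbitrary: k) (auto simp: ren_inst_tm)

lemma syms_ren_tm: "syms_tm (ren_tm f s) = f ` syms_tm s"
  by (induction s) (auto simp: image_UN)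

lemma syms_ren_fm: "syms_fm (ren_fm f A) = f ` syms_fm A"
  by (induction A) (auto simp: syms_ren_tm image_Un image_UN)

lemma lc_ren_tm: "lc_tm k (ren_tm f s) = lc_tm k s"
  by (induction s) auto

lemma ren_comp_tm: "ren_tm f (ren_tm g s) = ren_tm (\<lambda>x. f (g x)) s"
  by (induction s) auto

lemma ren_comp_fm: "ren_fm f (ren_fm g A) = ren_fm (\<lambda>x. f (g x)) A"
  by (induction A) (auto simp: ren_comp_tm)

lemma ren_id_tm: "(\<forall>g\<in>syms_tm s. f g = g) \<Longrightarrow> ren_tm f s = s"
  by (induction s) (auto simp: map_idI)

lemma ren_id_fm: "(\<forall>g\<in>syms_fm A. f g = g) \<Longrightarrow> ren_fm f A = A"
  by (induction A) (auto simp: map_idI ren_id_tm)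

lemma syms_inst_tm: "syms_tm (inst_tm k t s) \<subseteq> syms_tm s \<union> syms_tm t"
  by (induction s) auto

lemma syms_inst_fm: "syms_fm (inst_fm k t A) \<subseteq> syms_fm A \<union> syms_tm t"
  by (induction A arbitrary: k) (use syms_inst_tm in fastforce)+

lemma syms_inst_tm2: "syms_tm s \<subseteq> syms_tm (inst_tm k t s)"
  by (induction s) auto

lemma syms_inst_fm2: "syms_fm A \<subseteq> syms_fm (inst_fm k t A)"
  by (induction A arbitrary: k) (use syms_inst_tm2 in fastforce)+

lemma vac_tm: "c \<notin> syms_tm (inst_tm k (Fn c []) s) \<Longrightarrow> inst_tm k t s = s"
  by (induction s) (auto simp: map_idI split: if_splits)

lemma vac_fm: "c \<notin> syms_fm (inst_fm k (Fn c []) A) \<Longrightarrow> inst_fm k t A = A"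
  by (induction A arbitrary: k) (auto intro!: map_idI intro: vac_tm)

lemma finite_syms_tm: "finite (syms_tm s)"
  by (induction s) auto

lemma finite_syms_fm: "finite (syms_fm A)"
  by (induction A) (auto simp: finite_syms_tm)

definition syms_ms :: "fm multiset \<Rightarrow> nat set" where
  "syms_ms M = (\<Union>A\<in>set_mset M. syms_fm A)"

lemma syms_ms_simps[simp]:
  "syms_ms {#} = {}"
  "syms_ms (add_mset A M) = syms_fm A \<union> syms_ms M"
  "syms_ms (M + N) = syms_ms M \<union> syms_ms N"
  "syms_ms (image_mset (ren_fm f) M) = f ` syms_ms M"
  by (auto simp: syms_ms_def syms_ren_fm)

lemma finite_syms_ms[simp]: "finite (syms_ms M)"
  by (auto simp: syms_ms_def finite_syms_fm)

lemma syms_seq_eq: "syms_seq G D = syms_ms G \<union> syms_ms D"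
  by (auto simp: syms_seq_def syms_ms_def)

definition sw :: "nat \<Rightarrow> nat \<Rightarrow> nat \<Rightarrow> nat" where
  "sw c d x = (if x = c then d else if x = d then c else x)"

lemma inj_sw: "inj (sw c d)"
  by (auto simp: inj_on_def sw_def)

lemma sw_sw: "sw c d \<circ> sw c d = id"
  by (auto simp: sw_def)

lemma ren_sw_sw[simp]: "ren_fm (sw c d) (ren_fm (sw c d) A) = A"
  by (simp add: ren_comp_fm, rule ren_id_fm) (auto simp: sw_def)

lemma ren_sw_fix: "c \<notin> syms_fm A \<Longrightarrow> d \<notin> syms_fm A \<Longrightarrow> ren_fm (sw c d) A = A"
  by (rule ren_id_fm) (auto simp: sw_def)

lemma img_sw_sw[simp]: "image_mset (ren_fm (sw c d)) (image_mset (ren_fm (sw c d)) M) = M"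
  by (induction M) auto

lemma img_sw_fix: "c \<notin> syms_ms M \<Longrightarrow> d \<notin> syms_ms M \<Longrightarrow> image_mset (ren_fm (sw c d)) M = M"
  by (induction M) (auto simp: ren_sw_fix)

lemma sw_notin: "d \<notin> X \<Longrightarrow> c \<notin> sw c d ` X"
  by (auto simp: sw_def split: if_splits)

lemma sw_notin2: "c \<notin> X \<Longrightarrow> d \<notin> X \<Longrightarrow> x \<notin> X \<Longrightarrow> sw c d x \<notin> sw c d ` X"
  using inj_sw[of c d] by (auto simp: inj_on_def)

lemma sw_disj: "c \<notin> S \<Longrightarrow> d \<notin> S \<Longrightarrow> S \<inter> X = {} \<Longrightarrow> S \<inter> sw c d ` X = {}"
  by (auto simp: sw_def)

lemma fresh_ex: "finite (X::nat set) \<Longrightarrow> \<exists>d. d \<notin> X"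
  using ex_new_if_finite infinite_UNIV_nat by blast

lemma is_axiom_ren:
  "is_axiom G D \<Longrightarrow> is_axiom (image_mset (ren_fm f) G) (image_mset (ren_fm f) D)"
  unfolding is_axiom_def
  apply (elim disjE exE)
   apply (metis image_eqI ren_fm.simps(2) set_image_mset)
  apply (rule disjI2)
  subgoal for A by (rule exI[of _ "ren_fm f A"]) (cases A; auto intro: rev_image_eqI)
  done

lemma ren_deriv:
  assumes "deriv P R G D"
    and "\<And>G D. P G D \<Longrightarrow> P (image_mset (ren_fm f) G) (image_mset (ren_fm f) D)"
    and "inj f"
  shows "deriv P R (image_mset (ren_fm f) G) (image_mset (ren_fm f) D)"
  using assms(1)
proof (induction rule: deriv.induct)
  case (ax G D)
  then show ?case using assms(2) is_axiom_ren by (auto intro: deriv.ax)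
next
  case (contrL B G D)
  then show ?case using assms(2)[OF contrL(1)] by (auto intro: deriv.contrL)
next
  case (contrR G B D)
  then show ?case using assms(2)[OF contrR(1)] by (auto intro: deriv.contrR)
next
  case (botR G C D)
  then show ?case using assms(2)[OF botR(1)] by (auto intro: deriv.botR)
next
  case (andL1 B C G D)
  then show ?case using assms(2)[OF andL1(1)] by (auto intro: deriv.andL1)
next
  case (andL2 B C G D)
  then show ?case using assms(2)[OF andL2(1)] by (auto intro: deriv.andL2)
next
  case (orL B C G D)
  then show ?case using assms(2)[OF orL(1)] by (auto intro: deriv.orL)
next
  case (andR G B C D)
  then show ?case using assms(2)[OF andR(1)] by (auto intro: deriv.andR)
next
  case (orR1 G B C D)
  then show ?case using assms(2)[OF orR1(1)] by (auto intro: deriv.orR1)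
next
  case (orR2 G B C D)
  then show ?case using assms(2)[OF orR2(1)] by (auto intro: deriv.orR2)
next
  case (impL B C G D T)
  then show ?case using assms(2)[OF impL(1)] by (auto intro: deriv.impL)
next
  case (impR G B C D)
  then show ?case using assms(2)[OF impR(1)] by (auto intro: deriv.impR)
next
  case (allL B G D t)
  then show ?case using assms(2)[OF allL(1)]
    by (auto intro!: deriv.allL[where t="ren_tm f t"] simp: ren_inst_fm lc_ren_tm)
next
  case (exR G B D t)
  then show ?case using assms(2)[OF exR(1)]
    by (auto intro!: deriv.exR[where t="ren_tm f t"] simp: ren_inst_fm lc_ren_tm)
next
  case (exL B G D c)
  have "f c \<notin> syms_seq (image_mset (ren_fm f) (add_mset (Ex B) G)) (image_mset (ren_fm f) D)"
    using exL(3) assms(3) by (auto simp: syms_seq_eq syms_ren_fm inj_image_mem_iff)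
  then show ?case using exL assms(2)[OF exL(1)]
    by (auto intro!: deriv.exL simp: ren_inst_fm)
next
  case (allR G B D c)
  have "f c \<notin> syms_seq (image_mset (ren_fm f) G) (image_mset (ren_fm f) (add_mset (All B) D))"
    using allR(3) assms(3) by (auto simp: syms_seq_eq syms_ren_fm inj_image_mem_iff)
  then show ?case using allR assms(2)[OF allR(1)]
    by (auto intro!: deriv.allR simp: ren_inst_fm)
qed


abbreviation IP :: "rule set \<Rightarrow> fm multiset \<Rightarrow> fm multiset \<Rightarrow> bool" where
  "IP R G D \<equiv> deriv (\<lambda>_ D'. size D' = 1) R G D"

lemma deriv_P: "deriv P R G D \<Longrightarrow> P G D"
  by (induction rule: deriv.induct) auto

lemma deriv_mono: "deriv P R G D \<Longrightarrow> R \<subseteq> R' \<Longrightarrow> deriv P R' G D"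
proof (induction rule: deriv.induct)
  case (allL B G D t) then show ?case by (auto intro: deriv.allL[where t=t])
next
  case (exR G B D t) then show ?case by (auto intro: deriv.exR[where t=t])
next
  case (exL B G D c) then show ?case by (auto intro: deriv.exL[where c=c])
next
  case (allR G B D c) then show ?case by (auto intro: deriv.allR[where c=c])
qed (auto intro: deriv.intros)

lemma IP_ren: "IP R G D \<Longrightarrow> inj f \<Longrightarrow> IP R (image_mset (ren_fm f) G) (image_mset (ren_fm f) D)"
  by (rule ren_deriv) auto

lemma weak: "IP R G D \<Longrightarrow> IP R (S + G) D"
proof (induction arbitrary: S rule: deriv.induct)
  case (ax G D)
  then show ?case by (auto intro!: deriv.ax simp: is_axiom_def)
next
  case (contrL B G D)
  then show ?case using contrL.IH[of S] by (auto intro: deriv.contrL)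
next
  case (contrR G B D)
  then show ?case using contrR.IH[of S] by (auto intro: deriv.contrR)
next
  case (botR G C D)
  then show ?case using botR.IH[of S] by (auto intro: deriv.botR)
next
  case (andL1 B C G D)
  then show ?case using andL1.IH[of S] by (auto intro: deriv.andL1)
next
  case (andL2 B C G D)
  then show ?case using andL2.IH[of S] by (auto intro: deriv.andL2)
next
  case (orL B C G D)
  then show ?case using orL.IH(1)[of S] orL.IH(2)[of S] by (auto intro: deriv.orL)
next
  case (andR G B C D)
  then show ?case using andR.IH(1)[of S] andR.IH(2)[of S] by (auto intro: deriv.andR)
next
  case (orR1 G B C D)
  then show ?case using orR1.IH[of S] by (auto intro: deriv.orR1)
next
  case (orR2 G B C D)
  then show ?case using orR2.IH[of S] by (auto intro: deriv.orR2)
next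
  case (impL B C G D T)
  then show ?case using impL.IH(1)[of S] impL.IH(2)[of S] by (auto intro: deriv.impL)
next
  case (impR G B C D)
  then show ?case using impR.IH[of S] by (auto intro: deriv.impR)
next
  case (allL B G D t)
  then show ?case using allL.IH[of S] by (auto intro: deriv.allL[where t=t])
next
  case (exR G B D t)
  then show ?case using exR.IH[of S] by (auto intro: deriv.exR[where t=t])
next
  case (exL B G D c)
  obtain d where d: "d \<notin> syms_ms S \<union> syms_ms (add_mset (Ex B) G) \<union> syms_ms D \<union> {c}"
    using fresh_ex by (metis finite_Un finite_insert finite_syms_ms insert_is_Un sup_commute)
  let ?p = "ren_fm (sw c d)"
  have c: "c \<notin> syms_ms (add_mset (Ex B) G) \<union> syms_ms D" using exL.hyps(3) by (simp add: syms_seq_eq)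
  have 1: "IP R (add_mset (subst0 B (Fn c [])) (image_mset ?p S + G)) D"
    using exL.IH[of "image_mset ?p S"] by simp
  have 2: "IP R (add_mset (Ex B) (image_mset ?p S + G)) D"
    apply (rule deriv.exL[where c=c])
    using exL.hyps 1 d c by (auto simp: syms_seq_eq sw_notin)
  note 3 = IP_ren[OF 2 inj_sw[of c d]]
  have e: "?p B = B" using c d by (intro ren_sw_fix) auto
  show ?case using 3 c d by (simp add: e img_sw_fix)
next
  case (allR G B D c)
  obtain d where d: "d \<notin> syms_ms S \<union> syms_ms G \<union> syms_ms (add_mset (All B) D) \<union> {c}"
    using fresh_ex by (metis finite_Un finite_insert finite_syms_ms insert_is_Un sup_commute)
  let ?p = "ren_fm (sw c d)"
  have c: "c \<notin> syms_ms G \<union> syms_ms (add_mset (All B) D)" using allR.hyps(3) by (simp add: syms_seq_eq)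
  have 1: "IP R (image_mset ?p S + G) (add_mset (subst0 B (Fn c [])) D)"
    using allR.IH[of "image_mset ?p S"] by simp
  have 2: "IP R (image_mset ?p S + G) (add_mset (All B) D)"
    apply (rule deriv.allR[where c=c])
    using allR.hyps 1 d c by (auto simp: syms_seq_eq sw_notin)
  note 3 = IP_ren[OF 2 inj_sw[of c d]]
  have e: "?p B = B" using c d by (intro ren_sw_fix) auto
  show ?case using 3 c d by (simp add: e img_sw_fix)
qed

lemma contr_ms: "IP R (M + M + G) D \<Longrightarrow> ContrL \<in> R \<Longrightarrow> IP R (M + G) D"
proof (induction M arbitrary: G)
  case empty
  then show ?case by simp
next
  case (add x M)
  have "IP R (add_mset x (add_mset x (M + M + G))) D" using add.prems by simp
  then have "IP R (add_mset x (M + M + G)) D"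
    using add.prems(2) deriv_P by (blast intro: deriv.contrL)
  then have "IP R (M + M + add_mset x G) D" by simp
  then have "IP R (M + add_mset x G) D" using add.IH add.prems(2) by blast
  then show ?case by simp
qed

inductive reach :: "fm \<Rightarrow> fm \<Rightarrow> bool" where
  rrefl: "reach F F"
| rleft: "reach F1 A \<Longrightarrow> reach (Or F1 F2) A"
| rright: "reach F2 A \<Longrightarrow> reach (Or F1 F2) A"

lemma reach_trans: "reach F G \<Longrightarrow> reach G A \<Longrightarrow> reach F A"
  by (induction rule: reach.induct) (auto intro: reach.intros)

lemma reach_ren: "reach F A \<Longrightarrow> reach (ren_fm f F) (ren_fm f A)"
  by (induction rule: reach.induct) (auto intro: reach.intros)

lemma reach_syms: "reach F A \<Longrightarrow> syms_fm A \<subseteq> syms_fm F"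
  by (induction rule: reach.induct) auto

lemma lift: "reach F A \<Longrightarrow> IP R G {#A#} \<Longrightarrow> OrR \<in> R \<Longrightarrow> IP R G {#F#}"
  by (induction rule: reach.induct) (auto intro: deriv.orR1 deriv.orR2)

definition covers :: "fm \<Rightarrow> fm multiset \<Rightarrow> bool" where
  "covers F D \<longleftrightarrow> (\<forall>A\<in>#D. A = Bot \<or> reach F A)"

definition R0 :: "rule set" where "R0 = UNIV - {AllL}"

lemma R0_simps[simp]: "AllL \<notin> R0" "r \<noteq> AllL \<Longrightarrow> r \<in> R0"
  by (auto simp: R0_def)


lemma lift0: "reach F A \<Longrightarrow> IP R0 G {#A#} \<Longrightarrow> IP R0 G {#F#}"
  using lift[of F A R0 G] by simp

lemma merge:
  "IP R0 G D \<Longrightarrow> D = {#Or F X#} \<Longrightarrow> S \<subseteq> syms_fm X \<Longrightarrow> S \<inter> syms_ms G = {} \<Longrightarrow>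
   (\<forall>G'. S \<inter> syms_ms G' = {} \<longrightarrow> IP R0 G' {#X#} \<longrightarrow> IP R0 (Pi + G') {#F#}) \<Longrightarrow>
   IP R0 (Pi + G) {#F#}"
proof (induction arbitrary: Pi rule: deriv.induct)
  case (ax G D)
  then show ?case by (auto simp: is_axiom_def)
next
  case (contrL B G D)
  have "IP R0 (Pi + add_mset B (add_mset B G)) {#F#}"
    using contrL by auto
  then show ?case using contrL by (auto intro: deriv.contrL)
next
  case (contrR G B D)
  then show ?case using deriv_P[OF contrR(3)] by auto
next
  case (botR G C D)
  then have "IP R0 G {#Bot#}" by auto
  then have "IP R0 (Pi + G) {#Bot#}" by (rule weak)
  then show ?case by (auto intro: deriv.botR[where D="{#}"])
next
  case (andL1 B C G D)
  have "IP R0 (Pi + add_mset B G) {#F#}" using andL1 by auto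
  then show ?case using andL1 by (auto intro: deriv.andL1)
next
  case (andL2 B C G D)
  have "IP R0 (Pi + add_mset C G) {#F#}" using andL2 by auto
  then show ?case using andL2 by (auto intro: deriv.andL2)
next
  case (orL B C G D)
  have "IP R0 (Pi + add_mset B G) {#F#}" "IP R0 (Pi + add_mset C G) {#F#}" using orL by auto
  then show ?case using orL by (auto intro: deriv.orL)
next
  case (andR G B C D)
  then show ?case by auto
next
  case (orR1 G B C D)
  then have "IP R0 G {#F#}" by auto
  then show ?case by (rule weak)
next
  case (orR2 G B C D)
  then show ?case by auto
next
  case (impL B C G D T)
  have "size (add_mset B D) = 1" using deriv_P[OF impL(3)] by simp
  then have D: "D = {#}" by (cases D) auto
  then have T: "T = {#Or F X#}" using impL by simp
  have 1: "IP R0 (Pi + add_mset C G) {#F#}" using impL T by auto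
  have "IP R0 G {#B#}" using impL(3) D by simp
  then have 2: "IP R0 (Pi + G) {#B#}" by (rule weak)
  have "IP R0 (add_mset (Imp B C) (Pi + G)) ({#} + {#F#})"
    by (rule deriv.impL) (use 1 2 in auto)
  then show ?case by simp
next
  case (impR G B C D)
  then show ?case by auto
next
  case (allL B G D t)
  then show ?case by auto
next
  case (exR G B D t)
  then show ?case by auto
next
  case (allR G B D c)
  then show ?case by auto
next
  case (exL B G D c)
  have DD: "D = {#Or F X#}" by fact
  have c: "c \<notin> syms_fm B" "c \<notin> syms_ms G" "c \<notin> syms_fm F" "c \<notin> syms_fm X"
    using exL.hyps(3) DD by (auto simp: syms_seq_eq)
  have cS: "c \<notin> S" using c exL.prems(2) by auto
  obtain d where d: "d \<notin> syms_ms Pi \<union> syms_fm B \<union> syms_ms G \<union> syms_fm F \<union> syms_fm X \<union> {c}"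
    using fresh_ex by (metis finite_Un finite_insert finite_syms_ms finite_syms_fm insert_is_Un sup_commute)
  have dS: "d \<notin> S" using d exL.prems(2) by auto
  let ?p = "ren_fm (sw c d)"
  have pF: "?p F = F" "?p X = X" "?p B = B" using c d by (auto intro: ren_sw_fix)
  have S1: "S \<inter> syms_ms (add_mset (subst0 B (Fn c [])) G) = {}"
    using exL.prems(3) syms_inst_fm[of 0 "Fn c []" B] cS by auto
  have hyp: "\<forall>G'. S \<inter> syms_ms G' = {} \<longrightarrow> IP R0 G' {#X#} \<longrightarrow> IP R0 (image_mset ?p Pi + G') {#F#}"
  proof (intro allI impI)
    fix G' assume a1: "S \<inter> syms_ms G' = {}" and a2: "IP R0 G' {#X#}"
    have "IP R0 (image_mset ?p G') {#X#}" using IP_ren[OF a2 inj_sw[of c d]] pF by simp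
    moreover have "S \<inter> syms_ms (image_mset ?p G') = {}" using sw_disj[OF cS dS a1] by simp
    ultimately have "IP R0 (Pi + image_mset ?p G') {#F#}" using exL.prems(4) by blast
    from IP_ren[OF this inj_sw[of c d]] show "IP R0 (image_mset ?p Pi + G') {#F#}" using pF by simp
  qed
  have 1: "IP R0 (add_mset (subst0 B (Fn c [])) (image_mset ?p Pi + G)) {#F#}"
    using exL.IH[OF DD exL.prems(2) S1 hyp] by simp
  have 2: "IP R0 (add_mset (Ex B) (image_mset ?p Pi + G)) {#F#}"
    apply (rule deriv.exL[where c=c])
    using 1 c d by (auto simp: syms_seq_eq sw_notin)
  note 3 = IP_ren[OF 2 inj_sw[of c d]]
  show ?case using 3 c d pF by (simp add: img_sw_fix)
qed

lemma main:
  "deriv (\<lambda>_ _. True) (UNIV - {ImpR, AllL}) G D \<Longrightarrow> covers F D \<Longrightarrow> IP R0 (Sg + G) {#F#}"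
proof (induction arbitrary: Sg F rule: deriv.induct)
  case (ax G D)
  show ?case
  proof (cases "Top \<in># D")
    case True
    then have "reach F Top" using ax.prems by (auto simp: covers_def)
    moreover have "IP R0 (Sg + G) {#Top#}" by (rule deriv.ax) (auto simp: is_axiom_def)
    ultimately show ?thesis by (rule lift0)
  next
    case False
    then obtain A where A: "A = Bot \<or> is_atomic A" "A \<in># G" "A \<in># D"
      using ax.hyps(2) by (auto simp: is_axiom_def)
    have ax1: "IP R0 (Sg + G) {#A#}" by (rule deriv.ax) (use A in \<open>auto simp: is_axiom_def\<close>)
    show ?thesis
    proof (cases "A = Bot")
      case True
      then show ?thesis using ax1 by (auto intro: deriv.botR[where D="{#}"])
    next
      case False
      then have "reach F A" using A ax.prems by (auto simp: covers_def)
      then show ?thesis by (rule lift0[OF _ ax1])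
    qed
  qed
next
  case (contrL B G D)
  have "IP R0 (Sg + add_mset B (add_mset B G)) {#F#}" using contrL by auto
  then show ?case by (auto intro: deriv.contrL)
next
  case (contrR G B D)
  then show ?case by (auto simp: covers_def)
next
  case (botR G C D)
  then show ?case by (auto simp: covers_def)
next
  case (andL1 B C G D)
  have "IP R0 (Sg + add_mset B G) {#F#}" using andL1 by auto
  then show ?case by (auto intro: deriv.andL1)
next
  case (andL2 B C G D)
  have "IP R0 (Sg + add_mset C G) {#F#}" using andL2 by auto
  then show ?case by (auto intro: deriv.andL2)
next
  case (orL B C G D)
  have "IP R0 (Sg + add_mset B G) {#F#}" "IP R0 (Sg + add_mset C G) {#F#}" using orL by auto
  then show ?case by (auto intro: deriv.orL)
next
  case (andR G B C D)
  have rF: "reach F (And B C)" and cD: "covers F D" using andR.prems by (auto simp: covers_def)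
  have h1: "IP R0 (Sg + G) {#Or F B#}"
    using andR.IH(1) cD by (auto simp: covers_def intro: reach.intros)
  have hyp: "\<forall>G'. {} \<inter> syms_ms G' = {} \<longrightarrow> IP R0 G' {#B#} \<longrightarrow> IP R0 ((Sg + G) + G') {#F#}"
  proof (intro allI impI)
    fix G' assume "IP R0 G' {#B#}"
    then have b: "IP R0 (G'' + G') {#B#}" for G'' by (rule weak)
    have h2: "IP R0 ((Sg + G') + G) {#Or F C#}"
      using andR.IH(2) cD by (auto simp: covers_def intro: reach.intros)
    have "IP R0 (G' + ((Sg + G') + G)) {#F#}"
    proof (rule merge[OF h2 refl, of "{}"])
      show "\<forall>G''. {} \<inter> syms_ms G'' = {} \<longrightarrow> IP R0 G'' {#C#} \<longrightarrow> IP R0 (G' + G'') {#F#}"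
      proof (intro allI impI)
        fix G'' assume "IP R0 G'' {#C#}"
        then have "IP R0 (G' + G'') {#C#}" by (rule weak)
        moreover have "IP R0 (G' + G'') {#B#}" using b[of G''] by (simp add: add.commute)
        ultimately have "IP R0 (G' + G'') {#And B C#}"
          by (auto intro: deriv.andR[where D="{#}"])
        then show "IP R0 (G' + G'') {#F#}" using lift0[OF rF] by simp
      qed
    qed auto
    then have "IP R0 (G' + G' + (Sg + G)) {#F#}" by (simp add: ac_simps)
    then have "IP R0 (G' + (Sg + G)) {#F#}" by (rule contr_ms) simp
    then show "IP R0 ((Sg + G) + G') {#F#}" by (simp add: ac_simps)
  qed
  have "IP R0 ((Sg + G) + (Sg + G)) {#F#}" by (rule merge[OF h1 refl _ _ hyp]) auto
  then have "IP R0 ((Sg + G) + (Sg + G) + {#}) {#F#}" by simp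
  then have "IP R0 ((Sg + G) + {#}) {#F#}" by (rule contr_ms) simp
  then show ?case by simp
next
  case (orR1 G B C D)
  have "reach (Or B C) B" by (auto intro: reach.intros)
  then have "reach F B" using orR1.prems reach_trans[of F "Or B C" B] by (auto simp: covers_def)
  then have "covers F (add_mset B D)" using orR1.prems by (auto simp: covers_def)
  then show ?case by (rule orR1.IH)
next
  case (orR2 G B C D)
  have "reach (Or B C) C" by (auto intro: reach.intros)
  then have "reach F C" using orR2.prems reach_trans[of F "Or B C" C] by (auto simp: covers_def)
  then have "covers F (add_mset C D)" using orR2.prems by (auto simp: covers_def)
  then show ?case by (rule orR2.IH)
next
  case (impL B C G D T)
  have cD: "covers F D" and cT: "covers F T" using impL.prems by (auto simp: covers_def)
  have h1: "IP R0 (Sg + G) {#Or F B#}"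
    using impL.IH(1) cD by (auto simp: covers_def intro: reach.intros)
  let ?Pi = "add_mset (Imp B C) (Sg + G)"
  have hyp: "\<forall>G'. {} \<inter> syms_ms G' = {} \<longrightarrow> IP R0 G' {#B#} \<longrightarrow> IP R0 (?Pi + G') {#F#}"
  proof (intro allI impI)
    fix G' assume "IP R0 G' {#B#}"
    then have 1: "IP R0 ((Sg + G) + G') {#B#}" by (rule weak)
    have 2: "IP R0 (add_mset C ((Sg + G) + G')) {#F#}"
      using impL.IH(2)[OF cT, of "Sg + G'"] by (simp add: ac_simps)
    have "IP R0 (add_mset (Imp B C) ((Sg + G) + G')) ({#} + {#F#})"
      by (rule deriv.impL) (use 1 2 in auto)
    then show "IP R0 (?Pi + G') {#F#}" by simp
  qed
  have "IP R0 (?Pi + (Sg + G)) {#F#}" by (rule merge[OF h1 refl _ _ hyp]) auto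
  then have "IP R0 ((Sg + G) + (Sg + G) + {#Imp B C#}) {#F#}" by (simp add: ac_simps)
  then have "IP R0 ((Sg + G) + {#Imp B C#}) {#F#}" by (rule contr_ms) simp
  then show ?case by simp
next
  case (impR G B C D)
  then show ?case by auto
next
  case (allL B G D t)
  then show ?case by auto
next
  case (exR G B D t)
  have rF: "reach F (Ex B)" and cD: "covers F D" using exR.prems by (auto simp: covers_def)
  have h1: "IP R0 (Sg + G) {#Or F (subst0 B t)#}"
    using exR.IH cD by (auto simp: covers_def intro: reach.intros)
  have hyp: "\<forall>G'. {} \<inter> syms_ms G' = {} \<longrightarrow> IP R0 G' {#subst0 B t#} \<longrightarrow> IP R0 ({#} + G') {#F#}"
  proof (intro allI impI)
    fix G' assume "IP R0 G' {#subst0 B t#}"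
    then have "IP R0 G' {#Ex B#}" using exR.hyps by (auto intro: deriv.exR[where D="{#}" and t=t])
    then show "IP R0 ({#} + G') {#F#}" using lift0[OF rF] by simp
  qed
  have "IP R0 ({#} + (Sg + G)) {#F#}" by (rule merge[OF h1 refl _ _ hyp]) auto
  then show ?case by simp
next
  case (exL B G D c)
  have c: "c \<notin> syms_fm B" "c \<notin> syms_ms G" "c \<notin> syms_ms D"
    using exL.hyps(3) by (auto simp: syms_seq_eq)
  obtain d where d: "d \<notin> syms_ms Sg \<union> syms_fm B \<union> syms_ms G \<union> syms_fm F \<union> syms_ms D \<union> {c}"
    using fresh_ex by (metis finite_Un finite_insert finite_syms_ms finite_syms_fm insert_is_Un sup_commute)
  let ?p = "ren_fm (sw c d)"
  have pB: "?p B = B" using c d by (auto intro: ren_sw_fix)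
  have cov: "covers (?p F) D"
    unfolding covers_def
  proof
    fix A assume "A \<in># D"
    then have "A = Bot \<or> reach F A" and "c \<notin> syms_fm A" "d \<notin> syms_fm A"
      using exL.prems c d by (auto simp: covers_def syms_ms_def)
    then show "A = Bot \<or> reach (?p F) A" using reach_ren[of F A "sw c d"] ren_sw_fix[of c A d] by auto
  qed
  have 1: "IP R0 (add_mset (subst0 B (Fn c [])) (image_mset ?p Sg + G)) {#?p F#}"
    using exL.IH[OF cov, of "image_mset ?p Sg"] by simp
  have 2: "IP R0 (add_mset (Ex B) (image_mset ?p Sg + G)) {#?p F#}"
    apply (rule deriv.exL[where c=c])
    using 1 c d by (auto simp: syms_seq_eq sw_notin syms_ren_fm)
  note 3 = IP_ren[OF 2 inj_sw[of c d]]
  show ?case using 3 c d pB by (simp add: img_sw_fix)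
next
  case (allR G B D c)
  have c: "c \<notin> syms_fm B" "c \<notin> syms_ms G" "c \<notin> syms_ms D"
    using allR.hyps(3) by (auto simp: syms_seq_eq)
  obtain d where d: "d \<notin> syms_ms Sg \<union> syms_fm B \<union> syms_ms G \<union> syms_fm F \<union> syms_ms D \<union> {c}"
    using fresh_ex by (metis finite_Un finite_insert finite_syms_ms finite_syms_fm insert_is_Un sup_commute)
  let ?p = "ren_fm (sw c d)"
  let ?X = "subst0 B (Fn c [])"
  have pB: "?p B = B" using c d by (auto intro: ren_sw_fix)
  have rF: "reach (?p F) (All B)"
    using allR.prems reach_ren[of F "All B" "sw c d"] pB by (auto simp: covers_def)
  have cov: "covers (Or (?p F) ?X) (add_mset ?X D)"
    unfolding covers_def
  proof
    fix A assume "A \<in># add_mset ?X D"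
    then consider "A = ?X" | "A \<in># D" by auto
    then show "A = Bot \<or> reach (Or (?p F) ?X) A"
    proof cases
      case 1 then show ?thesis by (auto intro: reach.intros)
    next
      case 2
      then have "A = Bot \<or> reach F A" and "c \<notin> syms_fm A" "d \<notin> syms_fm A"
        using allR.prems c d by (auto simp: covers_def syms_ms_def)
      then show ?thesis using reach_ren[of F A "sw c d"] ren_sw_fix[of c A d] by (auto intro: reach.intros)
    qed
  qed
  have h1: "IP R0 (image_mset ?p Sg + G) {#Or (?p F) ?X#}" using allR.IH[OF cov] .
  have 1: "IP R0 (image_mset ?p Sg + G) {#?p F#}"
  proof (cases "c \<in> syms_fm ?X")
    case True
    have hyp: "\<forall>G'. {c} \<inter> syms_ms G' = {} \<longrightarrow> IP R0 G' {#?X#} \<longrightarrow> IP R0 ({#} + G') {#?p F#}"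
    proof (intro allI impI)
      fix G' assume a1: "{c} \<inter> syms_ms G' = {}" and a2: "IP R0 G' {#?X#}"
      have "IP R0 G' {#All B#}"
        apply (rule deriv.allR[where D="{#}" and c=c])
        using a1 a2 c by (auto simp: syms_seq_eq)
      then show "IP R0 ({#} + G') {#?p F#}" using lift0[OF rF] by simp
    qed
    have "IP R0 ({#} + (image_mset ?p Sg + G)) {#?p F#}"
      by (rule merge[OF h1 refl _ _ hyp]) (use True c d sw_notin in auto)
    then show ?thesis by simp
  next
    case False
    then have vac: "\<And>t. subst0 B t = B" using vac_fm by blast
    have hyp: "\<forall>G'. {} \<inter> syms_ms G' = {} \<longrightarrow> IP R0 G' {#?X#} \<longrightarrow> IP R0 ({#} + G') {#?p F#}"
    proof (intro allI impI)
      fix G' assume a2: "IP R0 G' {#?X#}"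
      obtain e where e: "e \<notin> syms_ms G' \<union> syms_fm B"
        using fresh_ex by (metis finite_Un finite_syms_ms finite_syms_fm)
      have "IP R0 G' {#All B#}"
        apply (rule deriv.allR[where D="{#}" and c=e])
        using a2 e vac by (auto simp: syms_seq_eq)
      then show "IP R0 ({#} + G') {#?p F#}" using lift0[OF rF] by simp
    qed
    have "IP R0 ({#} + (image_mset ?p Sg + G)) {#?p F#}"
      by (rule merge[OF h1 refl _ _ hyp]) auto
    then show ?thesis by simp
  qed
  note 3 = IP_ren[OF 1 inj_sw[of c d]]
  show ?case using 3 c d by (simp add: img_sw_fix)
qed

lemma reach_disj: "B \<in> set Bs \<Longrightarrow> reach (disj Bs) B"
  by (induction Bs rule: disj.induct) (auto intro: reach.intros)

theorem theorem5:
  fixes \<Gamma> :: "fm multiset" and Bs :: "fm list"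
  assumes "\<forall>A\<in>#\<Gamma>. formula_ok A"
    and "\<forall>B\<in>set Bs. formula_ok B"
    and "Bs \<noteq> []"
    and "C_provable_with (UNIV - {ImpR, AllL}) \<Gamma> (mset Bs)"
  shows "I_provable \<Gamma> {# disj Bs #}
         \<and> (length Bs = 1 \<longrightarrow> I_provable \<Gamma> {# hd Bs #})"
proof -
  have "covers (disj Bs) (mset Bs)" by (auto simp: covers_def reach_disj)
  from main[OF assms(4) this, of "{#}"] have "IP R0 \<Gamma> {#disj Bs#}" by simp
  then have I: "I_provable \<Gamma> {# disj Bs #}" by (rule deriv_mono) simp
  moreover have "length Bs = 1 \<longrightarrow> disj Bs = hd Bs"
    by (cases Bs rule: disj.cases) auto
  ultimately show ?thesis by auto
qed

end
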